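(* Let $\mathcal{H}$ be a hypertree and $T$ a host tree of $\mathcal{H}$. Then $\mathcal{H}$ is a basic hypertree if and only if for every edge $uv$ of $T$ and every vertex $x\notin I_\mathcal{H}(uv)$ there exists a vertex $y$ such that some edge of $\mathcal{H}$ contains $\{u,v,y\}$ and no edge of $\mathcal{H}$ contains $\{x,y\}$. Equivalently, $\mathcal{H}$ is basic if and only if for every basic set $B$ of $\mathcal{H}$ and every vertex $x\notin B$ there exists a vertex $y$ such that some edge of $\mathcal{H}$ contains $B\cup\{y\}$ and no edge of $\mathcal{H}$ contains $\{x,y\}$.
   Context: A hypergraph $\mathcal{H}$ has a finite vertex set $V(\mathcal{H})$ and a finite family of nonempty subsets (edges). A host tree of $\mathcal{H}$ is a tree on $V(\mathcal{H})$ in which every edge induces a connected subgraph; a hypertree is a hypergraph with a host tree. Hypergraphs on the same vertex set are equivalent if they have the same host trees. $\mathcal{N}(\mathcal{H})$ is the hypergraph on $V(\mathcal{H})$ having, for each $v\in V(\mathcal{H})$, the edge equal to the union of all edges of $\mathcal{H}$ containing $v$. A basic hypertree is a hypertree $\mathcal{H}$ equivalent to $\mathcal{N}(\mathcal{H})$. For $V'\subseteq V(\mathcal{H})$, $I_\mathcal{H}(V')$ is the intersection of all edges containing $V'$, or $V(\mathcal{H})$ if none does; $I_\mathcal{H}(uv)=I_\mathcal{H}(\{u,v\})$. A union of sets is connected if the intersection graph of the sets is connected. $Comp(\mathcal{H})$ is the hypergraph without repeated edges on $V(\mathcal{H})$ whose edges are $V(\mathcal{H})$, all singletons, and all proper subsets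 obtainable from edges of $\mathcal{H}$ by repeated nonempty intersections and connected unions; a basic set of $\mathcal{H}$ is an edge of $Comp(\mathcal{H})$ with more than one vertex that is not a connected union of strictly smaller edges of $Comp(\mathcal{H})$. *)

theory Defs
  imports Main
begin

text \<open>A hypergraph is given by a finite vertex set V and a finite family E of
nonempty subsets of V (repetitions of edges are irrelevant for all notions used).\<close>

definition hypergraph :: "'a set \<Rightarrow> 'a set set \<Rightarrow> bool" where
  "hypergraph V E \<longleftrightarrow> finite V \<and> finite E \<and> (\<forall>e\<in>E. e \<noteq> {} \<and> e \<subseteq> V)"

definition adj_in :: "'a set set \<Rightarrow> 'a set \<Rightarrow> ('a \<times> 'a) set" where
  "adj_in T S = {(u, v). u \<in> S \<and> v \<in> S \<and> {u, v} \<in> T}"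

text \<open>S induces a connected subgraph of T (vacuously true for S = {}).\<close>
definition induces_connected :: "'a set set \<Rightarrow> 'a set \<Rightarrow> bool" where
  "induces_connected T S \<longleftrightarrow> (\<forall>u\<in>S. \<forall>v\<in>S. (u, v) \<in> (adj_in T S)\<^sup>*)"

text \<open>A tree on V: a graph on V that is connected and acyclic; acyclicity is
expressed as: no edge {u,v} lies on a cycle, i.e. removing it disconnects u from v.\<close>
definition tree_on :: "'a set \<Rightarrow> 'a set set \<Rightarrow> bool" where
  "tree_on V T \<longleftrightarrow> finite V \<and> V \<noteq> {} \<and>
     (\<forall>e\<in>T. \<exists>u v. u \<noteq> v \<and> u \<in> V \<and> v \<in> V \<and> e = {u, v}) \<and>
     induces_connected T V \<and>
     (\<forall>u v. {u, v} \<in> T \<longrightarrow> (u, v) \<notin> (adj_in (T - {{u, v}}) V)\<^sup>*)"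

definition host_tree :: "'a set \<Rightarrow> 'a set set \<Rightarrow> 'a set set \<Rightarrow> bool" where
  "host_tree V E T \<longleftrightarrow> tree_on V T \<and> (\<forall>e\<in>E. induces_connected T e)"

definition hypertree :: "'a set \<Rightarrow> 'a set set \<Rightarrow> bool" where
  "hypertree V E \<longleftrightarrow> hypergraph V E \<and> (\<exists>T. host_tree V E T)"

definition equivalent :: "'a set \<Rightarrow> 'a set set \<Rightarrow> 'a set set \<Rightarrow> bool" where
  "equivalent V E E' \<longleftrightarrow> (\<forall>T. host_tree V E T \<longleftrightarrow> host_tree V E' T)"

definition NH :: "'a set \<Rightarrow> 'a set set \<Rightarrow> 'a set set" where
  "NH V E = {\<Union>{e\<in>E. v \<in> e} | v. v \<in> V}"

definition basic_hypertree :: "'a set \<Rightarrow> 'a set set \<Rightarrow> bool" where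
  "basic_hypertree V E \<longleftrightarrow> hypertree V E \<and> equivalent V E (NH V E)"

definition IH :: "'a set \<Rightarrow> 'a set set \<Rightarrow> 'a set \<Rightarrow> 'a set" where
  "IH V E V' = (if \<exists>e\<in>E. V' \<subseteq> e then \<Inter>{e\<in>E. V' \<subseteq> e} else V)"

text \<open>A union of a family F of sets is connected if the intersection graph of F is connected.\<close>
definition connected_family :: "'a set set \<Rightarrow> bool" where
  "connected_family F \<longleftrightarrow> F \<noteq> {} \<and> finite F \<and>
     (\<forall>A\<in>F. \<forall>B\<in>F. (A, B) \<in> {(X, Y). X \<in> F \<and> Y \<in> F \<and> X \<inter> Y \<noteq> {}}\<^sup>*)"

inductive_set comp_gen :: "'a set set \<Rightarrow> 'a set set" for E :: "'a set set" where
  edge: "e \<in> E \<Longrightarrow> e \<in> comp_gen E"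
| inter: "A \<in> comp_gen E \<Longrightarrow> B \<in> comp_gen E \<Longrightarrow> A \<inter> B \<noteq> {} \<Longrightarrow> A \<inter> B \<in> comp_gen E"
| union: "\<forall>A\<in>F. A \<in> comp_gen E \<Longrightarrow> connected_family F \<Longrightarrow> \<Union>F \<in> comp_gen E"

text \<open>Edges of Comp(H) (as a set, so without repeated edges).\<close>
definition Comp :: "'a set \<Rightarrow> 'a set set \<Rightarrow> 'a set set" where
  "Comp V E = {V} \<union> {{v} | v. v \<in> V} \<union> {A \<in> comp_gen E. A \<subset> V}"

definition basic_set :: "'a set \<Rightarrow> 'a set set \<Rightarrow> 'a set \<Rightarrow> bool" where
  "basic_set V E B \<longleftrightarrow> B \<in> Comp V E \<and> card B > 1 \<and>
     \<not> (\<exists>F. F \<subseteq> Comp V E \<and> (\<forall>A\<in>F. A \<subset> B) \<and> connected_family F \<and> \<Union>F = B)"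

end

theory Submission
  imports Defs
begin


definition reach :: "'a set set \<Rightarrow> 'a set \<Rightarrow> 'a \<Rightarrow> 'a set" where
  "reach F S a = {z. (a, z) \<in> (adj_in F S)\<^sup>*}"

lemma adj_sym: "(a,b) \<in> adj_in T S \<Longrightarrow> (b,a) \<in> adj_in T S"
  by (auto simp: adj_in_def insert_commute)

lemma rt_sym: "(a,b) \<in> (adj_in T S)\<^sup>* \<Longrightarrow> (b,a) \<in> (adj_in T S)\<^sup>*"
proof (induction rule: rtrancl_induct)
  case base then show ?case by simp
next
  case (step y z)
  then show ?case by (meson adj_sym converse_rtrancl_into_rtrancl)
qed

lemma adj_mono: "T1 \<subseteq> T2 \<Longrightarrow> S1 \<subseteq> S2 \<Longrightarrow> adj_in T1 S1 \<subseteq> adj_in T2 S2"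
  by (auto simp: adj_in_def)

lemma rt_mono: "T1 \<subseteq> T2 \<Longrightarrow> S1 \<subseteq> S2 \<Longrightarrow> (a,b) \<in> (adj_in T1 S1)\<^sup>* \<Longrightarrow> (a,b) \<in> (adj_in T2 S2)\<^sup>*"
  using rtrancl_mono[OF adj_mono] by blast

lemma rt_mono_sub: "adj_in T1 S1 \<subseteq> adj_in T2 S2 \<Longrightarrow> (a,b) \<in> (adj_in T1 S1)\<^sup>* \<Longrightarrow> (a,b) \<in> (adj_in T2 S2)\<^sup>*"
  using rtrancl_mono by blast

lemma leave: "(a,b) \<in> R\<^sup>* \<Longrightarrow> a \<in> C \<Longrightarrow> b \<notin> C \<Longrightarrow> \<exists>c d. c \<in> C \<and> d \<notin> C \<and> (c,d) \<in> R"
  by (induction rule: rtrancl_induct) auto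

lemma rt_mem: "(a,b) \<in> (adj_in T S)\<^sup>* \<Longrightarrow> a \<noteq> b \<Longrightarrow> a \<in> S \<and> b \<in> S"
proof -
  assume h: "(a,b) \<in> (adj_in T S)\<^sup>*" "a \<noteq> b"
  have "a \<in> S" using h by (cases rule: converse_rtranclE) (auto simp: adj_in_def)
  moreover have "b \<in> S" using h by (cases rule: rtranclE) (auto simp: adj_in_def)
  ultimately show ?thesis by simp
qed

lemma rt_edge: "{a,b} \<in> T \<Longrightarrow> a \<in> S \<Longrightarrow> b \<in> S \<Longrightarrow> (a,b) \<in> adj_in T S"
  by (simp add: adj_in_def)

lemma conn_single: "induces_connected T {v}"
  by (simp add: induces_connected_def)

lemma conn_from: assumes "v \<in> S" "\<forall>z\<in>S. (v,z) \<in> (adj_in T S)\<^sup>*" shows "induces_connected T S"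
  unfolding induces_connected_def
  by (meson assms rt_sym rtrancl_trans)

context fixes V T assumes tr: "tree_on V T" begin

lemma finV: "finite V" using tr by (simp add: tree_on_def)

lemma edgeV: assumes "{a,b} \<in> T" shows "a \<in> V \<and> b \<in> V \<and> a \<noteq> b"
proof -
  obtain u v where "u \<noteq> v" "u \<in> V" "v \<in> V" "{a,b} = {u,v}"
    using tr assms unfolding tree_on_def by blast
  then show ?thesis by (auto simp: doubleton_eq_iff)
qed

lemma bridge: "{a,b} \<in> T \<Longrightarrow> (a,b) \<notin> (adj_in (T - {{a,b}}) V)\<^sup>*"
  using tr by (simp add: tree_on_def)

lemma connV: "a \<in> V \<Longrightarrow> b \<in> V \<Longrightarrow> (a,b) \<in> (adj_in T V)\<^sup>*"
  using tr by (simp add: tree_on_def induces_connected_def)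

context fixes u v assumes uv: "{u,v} \<in> T" begin

lemma sides_disj: "reach (T - {{u,v}}) V u \<inter> reach (T - {{u,v}}) V v = {}"
proof (rule ccontr)
  assume "reach (T - {{u,v}}) V u \<inter> reach (T - {{u,v}}) V v \<noteq> {}"
  then obtain z where "(u,z) \<in> (adj_in (T - {{u,v}}) V)\<^sup>*" "(v,z) \<in> (adj_in (T - {{u,v}}) V)\<^sup>*"
    by (auto simp: reach_def)
  then have "(u,v) \<in> (adj_in (T - {{u,v}}) V)\<^sup>*" by (meson rt_sym rtrancl_trans)
  then show False using bridge[OF uv] by simp
qed

lemma in_sides: "u \<in> reach (T - {{u,v}}) V u" "v \<in> reach (T - {{u,v}}) V v"
  by (auto simp: reach_def)

lemma closure: assumes "{c,d} \<in> T" "{c,d} \<noteq> {u,v}" "c \<in> reach (T - {{u,v}}) V w"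
  shows "d \<in> reach (T - {{u,v}}) V w"
proof -
  have "(c,d) \<in> adj_in (T - {{u,v}}) V" using assms edgeV[OF assms(1)] by (simp add: adj_in_def)
  then show ?thesis using assms(3) by (auto simp: reach_def)
qed

lemma cover: assumes "z \<in> V" shows "z \<in> reach (T - {{u,v}}) V u \<union> reach (T - {{u,v}}) V v"
proof -
  have uV: "u \<in> V" using edgeV[OF uv] by simp
  have "(u,z) \<in> (adj_in T V)\<^sup>*" using connV[OF uV assms] .
  then show ?thesis
  proof (induction rule: rtrancl_induct)
    case base then show ?case by (simp add: reach_def)
  next
    case (step y z)
    then have e: "{y,z} \<in> T" by (simp add: adj_in_def)
    show ?case
    proof (cases "{y,z} = {u,v}")
      case True
      then have "z = u \<or> z = v" by (auto simp: doubleton_eq_iff)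
      then show ?thesis using in_sides by auto
    next
      case False
      then show ?thesis using closure[OF e False] step.IH by blast
    qed
  qed
qed

lemma side_lemma: assumes "induces_connected T S" "a \<in> S" "b \<in> S"
  "a \<in> reach (T - {{u,v}}) V u" "b \<in> reach (T - {{u,v}}) V v"
  shows "u \<in> S \<and> v \<in> S"
proof -
  have "(a,b) \<in> (adj_in T S)\<^sup>*" using assms unfolding induces_connected_def by blast
  moreover have "b \<notin> reach (T - {{u,v}}) V u" using assms(5) sides_disj by blast
  ultimately obtain c d where cd: "c \<in> reach (T - {{u,v}}) V u" "d \<notin> reach (T - {{u,v}}) V u"
    "(c,d) \<in> adj_in T S" using leave[of a b "adj_in T S" "reach (T - {{u,v}}) V u"] assms(4) by blast
  then have e: "{c,d} \<in> T" "c \<in> S" "d \<in> S" by (auto simp: adj_in_def)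
  have "{c,d} = {u,v}"
  proof (rule ccontr)
    assume "{c,d} \<noteq> {u,v}"
    from closure[OF e(1) this cd(1)] cd(2) show False by simp
  qed
  then show ?thesis using e by (auto simp: doubleton_eq_iff)
qed

lemma L_side: assumes "(v,z) \<in> (adj_in T S)\<^sup>*"
  shows "(z \<in> reach (T - {{u,v}}) V v \<longrightarrow> (v,z) \<in> (adj_in (T - {{u,v}}) S)\<^sup>*) \<and>
         (z \<in> reach (T - {{u,v}}) V u \<longrightarrow> (u,z) \<in> (adj_in (T - {{u,v}}) S)\<^sup>*)"
  using assms
proof (induction rule: rtrancl_induct)
  case base
  have "v \<notin> reach (T - {{u,v}}) V u" using sides_disj in_sides(2) by blast
  then show ?case by simp
next
  case (step y z)
  then have e: "{y,z} \<in> T" "y \<in> S" "z \<in> S" by (auto simp: adj_in_def)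
  show ?case
  proof (cases "{y,z} = {u,v}")
    case True
    then have "z = u \<or> z = v" by (auto simp: doubleton_eq_iff)
    moreover have "v \<notin> reach (T - {{u,v}}) V u" "u \<notin> reach (T - {{u,v}}) V v"
      using sides_disj in_sides by blast+
    ultimately show ?thesis by auto
  next
    case False
    have e2: "(y,z) \<in> adj_in (T - {{u,v}}) S" using e False by (simp add: adj_in_def)
    have F2: "{z,y} \<noteq> {u,v}" using False by (simp add: insert_commute)
    have ez: "{z,y} \<in> T" using e by (simp add: insert_commute)
    show ?thesis
    proof (intro conjI impI)
      assume "z \<in> reach (T - {{u,v}}) V v"
      then have "y \<in> reach (T - {{u,v}}) V v" using closure[OF ez F2] by blast
      then show "(v,z) \<in> (adj_in (T - {{u,v}}) S)\<^sup>*" using step.IH e2 by auto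
    next
      assume "z \<in> reach (T - {{u,v}}) V u"
      then have "y \<in> reach (T - {{u,v}}) V u" using closure[OF ez F2] by blast
      then show "(u,z) \<in> (adj_in (T - {{u,v}}) S)\<^sup>*" using step.IH e2 by auto
    qed
  qed
qed

end

end


context fixes V T assumes tr: "tree_on V T" begin

lemma L_int: "S \<subseteq> V \<Longrightarrow> S' \<subseteq> V \<Longrightarrow> induces_connected T S' \<Longrightarrow> p \<in> S' \<Longrightarrow> q \<in> S'
  \<Longrightarrow> (p,q) \<in> (adj_in T S)\<^sup>* \<Longrightarrow> (p,q) \<in> (adj_in T (S \<inter> S'))\<^sup>*"
proof (induction "card S" arbitrary: S p q rule: less_induct)
  case less
  have finS: "finite S" using less.prems(1) finV[OF tr] finite_subset by blast
  show ?case
  proof (cases "S \<subseteq> S'")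
    case True
    then have "S \<inter> S' = S" by blast
    then show ?thesis using less.prems by simp
  next
    case False
    then obtain w where w: "w \<in> S" "w \<notin> S'" by blast
    show ?thesis
    proof (cases "(p,q) \<in> (adj_in T (S - {w}))\<^sup>*")
      case True
      have "card (S - {w}) < card S" using card_Diff1_less[OF finS w(1)] .
      then have "(p,q) \<in> (adj_in T ((S - {w}) \<inter> S'))\<^sup>*"
        using less.hyps[OF _ _ less.prems(2-5) True] less.prems(1) by blast
      then show ?thesis by (rule rt_mono[rotated 2]) auto
    next
      case False
      have pq: "p \<noteq> q" using False by auto
      have pS: "p \<in> S" "q \<in> S" using rt_mem[OF less.prems(6) pq] by auto
      have pw: "p \<noteq> w" "q \<noteq> w" using w less.prems(4,5) by auto
      have "q \<notin> reach T (S - {w}) p" using False by (simp add: reach_def)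
      moreover have "p \<in> reach T (S - {w}) p" by (simp add: reach_def)
      ultimately obtain c d where cd: "c \<in> reach T (S - {w}) p" "d \<notin> reach T (S - {w}) p"
        "(c,d) \<in> adj_in T S" using leave[OF less.prems(6)] by blast
      have cS: "c \<in> S - {w}"
        using cd(1) pS pw rt_mem[of p c T "S - {w}"] by (cases "c = p") (auto simp: reach_def)
      have dw: "d = w"
      proof (rule ccontr)
        assume "d \<noteq> w"
        then have "(c,d) \<in> adj_in T (S - {w})" using cd(3) cS by (auto simp: adj_in_def)
        then have "d \<in> reach T (S - {w}) p" using cd(1) by (auto simp: reach_def)
        then show False using cd(2) by simp
      qed
      have qp: "(q,p) \<in> (adj_in T S)\<^sup>*" using rt_sym[OF less.prems(6)] .
      have "p \<notin> reach T (S - {w}) q" using False rt_sym[of q p T "S - {w}"] by (auto simp: reach_def)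
      moreover have "q \<in> reach T (S - {w}) q" by (simp add: reach_def)
      ultimately obtain c' d' where cd': "c' \<in> reach T (S - {w}) q" "d' \<notin> reach T (S - {w}) q"
        "(c',d') \<in> adj_in T S" using leave[OF qp] by blast
      have cS': "c' \<in> S - {w}"
        using cd'(1) pS pw rt_mem[of q c' T "S - {w}"] by (cases "c' = q") (auto simp: reach_def)
      have dw': "d' = w"
      proof (rule ccontr)
        assume "d' \<noteq> w"
        then have "(c',d') \<in> adj_in T (S - {w})" using cd'(3) cS' by (auto simp: adj_in_def)
        then have "d' \<in> reach T (S - {w}) q" using cd'(1) by (auto simp: reach_def)
        then show False using cd'(2) by simp
      qed
      have cc: "c \<noteq> c'"
      proof
        assume "c = c'"
        then have "(p,c) \<in> (adj_in T (S - {w}))\<^sup>*" "(q,c) \<in> (adj_in T (S - {w}))\<^sup>*"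
          using cd(1) cd'(1) by (auto simp: reach_def)
        then have "(p,q) \<in> (adj_in T (S - {w}))\<^sup>*" using rt_sym rtrancl_trans by metis
        then show False using False by simp
      qed
      have ecw: "{c,w} \<in> T" using cd(3) dw by (simp add: adj_in_def)
      have ecw': "{c',w} \<in> T" using cd'(3) dw' by (simp add: adj_in_def)
      let ?R = "adj_in (T - {{c,w}}) V"
      have sub1: "adj_in T (S - {w}) \<subseteq> ?R" using less.prems(1) by (auto simp: adj_in_def doubleton_eq_iff)
      have sub2: "adj_in T S' \<subseteq> ?R" using less.prems(2) w(2) by (auto simp: adj_in_def doubleton_eq_iff)
      have r0: "(p,c) \<in> ?R\<^sup>*" using cd(1) rt_mono_sub[OF sub1] by (auto simp: reach_def)
      have r1: "(c,p) \<in> ?R\<^sup>*" using rt_sym[OF r0] .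
      have r2: "(p,q) \<in> ?R\<^sup>*" using less.prems(3-5) rt_mono_sub[OF sub2]
        by (auto simp: induces_connected_def)
      have r3: "(q,c') \<in> ?R\<^sup>*" using cd'(1) rt_mono_sub[OF sub1] by (auto simp: reach_def)
      have r4: "(c',w) \<in> ?R" using ecw' cc edgeV[OF tr ecw'] by (auto simp: adj_in_def doubleton_eq_iff)
      have "(c,w) \<in> ?R\<^sup>*" using r1 r2 r3 r4 by (meson rtrancl_trans rtrancl.rtrancl_into_rtrancl)
      then show ?thesis using bridge[OF tr ecw] by simp
    qed
  qed
qed

end


lemma reach_sub: "z \<in> reach F V a \<Longrightarrow> z = a \<or> z \<in> V"
  unfolding reach_def using rt_mem by fastforce

context fixes V T assumes tr: "tree_on V T" begin

lemma exch: assumes uv: "{u,v} \<in> T" and xB: "x \<in> reach (T - {{u,v}}) V v"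
  shows "tree_on V (insert {u,x} (T - {{u,v}}))"
proof -
  define T0 where "T0 = T - {{u,v}}"
  define T' where "T' = insert {u,x} T0"
  have uV: "u \<in> V" and vV: "v \<in> V" using edgeV[OF tr uv] by auto
  have xV: "x \<in> V" using reach_sub[OF xB] vV by auto
  have xA: "x \<notin> reach T0 V u" using sides_disj[OF tr uv] xB unfolding T0_def by blast
  have ux: "u \<noteq> x" using xA by (auto simp: reach_def)
  have T0T': "T0 \<subseteq> T'" unfolding T'_def by blast
  have fin: "finite V" "V \<noteq> {}" using tr by (auto simp: tree_on_def)
  have edges: "\<forall>e\<in>T'. \<exists>a b. a \<noteq> b \<and> a \<in> V \<and> b \<in> V \<and> e = {a, b}"
    using tr ux uV xV unfolding T'_def T0_def tree_on_def by blast
  have fromu: "(u,z) \<in> (adj_in T' V)\<^sup>*" if "z \<in> V" for z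
  proof -
    have "z \<in> reach T0 V u \<union> reach T0 V v" using cover[OF tr uv that] unfolding T0_def .
    then show ?thesis
    proof
      assume "z \<in> reach T0 V u"
      then show ?thesis using rt_mono[OF T0T' order_refl] by (auto simp: reach_def)
    next
      assume "z \<in> reach T0 V v"
      then have "(v,z) \<in> (adj_in T0 V)\<^sup>*" "(v,x) \<in> (adj_in T0 V)\<^sup>*" using xB
        by (auto simp: reach_def T0_def)
      then have "(x,z) \<in> (adj_in T0 V)\<^sup>*" by (meson rt_sym rtrancl_trans)
      then have "(x,z) \<in> (adj_in T' V)\<^sup>*" using rt_mono[OF T0T' order_refl] by blast
      moreover have "(u,x) \<in> adj_in T' V" using uV xV by (simp add: adj_in_def T'_def)
      ultimately show ?thesis by (meson converse_rtrancl_into_rtrancl)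
    qed
  qed
  have connT': "induces_connected T' V" using conn_from[of u V T'] fromu uV by blast
  have bridges: "(a,b) \<notin> (adj_in (T' - {{a,b}}) V)\<^sup>*" if ab: "{a,b} \<in> T'" for a b
  proof
    assume P: "(a,b) \<in> (adj_in (T' - {{a,b}}) V)\<^sup>*"
    show False
    proof (cases "{a,b} = {u,x}")
      case True
      have "T' - {{a,b}} \<subseteq> T0" unfolding T'_def True by blast
      then have P0: "(a,b) \<in> (adj_in T0 V)\<^sup>*" using rt_mono[OF _ order_refl P] by blast
      have "(u,x) \<in> (adj_in T0 V)\<^sup>*"
        using True P0 rt_sym[OF P0] by (metis doubleton_eq_iff)
      then show False using xA by (simp add: reach_def)
    next
      case False
      define g where "g = {a,b}"
      have gT0: "g \<in> T0" using ab False unfolding T'_def g_def by blast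
      have gT: "{a,b} \<in> T" using gT0 unfolding T0_def g_def by blast
      have abV: "a \<in> V" "b \<in> V" using edgeV[OF tr gT] by auto
      have sub: "adj_in (T0 - {g}) V \<subseteq> adj_in (T - {{a,b}}) V"
        unfolding T0_def g_def by (rule adj_mono) auto
      have key: "{c,d} = {u,x}" if "c \<in> reach (T0 - {g}) V s" "d \<notin> reach (T0 - {g}) V s"
        "(c,d) \<in> adj_in (T' - {g}) V" for c d s
      proof (rule ccontr)
        assume "{c,d} \<noteq> {u,x}"
        then have "(c,d) \<in> adj_in (T0 - {g}) V" using that(3) by (auto simp: adj_in_def T'_def)
        then show False using that(1,2) by (auto simp: reach_def intro: rtrancl_into_rtrancl)
      qed
      have bZa: "b \<notin> reach (T0 - {g}) V a"
      proof
        assume "b \<in> reach (T0 - {g}) V a"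
        then have "(a,b) \<in> (adj_in (T - {{a,b}}) V)\<^sup>*" using rt_mono_sub[OF sub] by (auto simp: reach_def)
        then show False using bridge[OF tr gT] by simp
      qed
      have aZb: "a \<notin> reach (T0 - {g}) V b"
      proof
        assume "a \<in> reach (T0 - {g}) V b"
        then have "(b,a) \<in> (adj_in (T - {{a,b}}) V)\<^sup>*" using rt_mono_sub[OF sub] by (auto simp: reach_def)
        then show False using bridge[OF tr gT] rt_sym[of b a] by blast
      qed
      have P': "(a,b) \<in> (adj_in (T' - {g}) V)\<^sup>*" using P g_def by simp
      obtain c d where cd: "c \<in> reach (T0 - {g}) V a" "d \<notin> reach (T0 - {g}) V a"
        "(c,d) \<in> adj_in (T' - {g}) V"
        using leave[OF P', of "reach (T0 - {g}) V a"] bZa by (auto simp: reach_def)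
      have k1: "{c,d} = {u,x}" using key[OF cd] .
      obtain c' d' where cd': "c' \<in> reach (T0 - {g}) V b" "d' \<notin> reach (T0 - {g}) V b"
        "(c',d') \<in> adj_in (T' - {g}) V"
        using leave[OF rt_sym[OF P'], of "reach (T0 - {g}) V b"] aZb by (auto simp: reach_def)
      have k2: "{c',d'} = {u,x}" using key[OF cd'] .
      have disj: "reach (T0 - {g}) V a \<inter> reach (T0 - {g}) V b = {}"
      proof (rule ccontr)
        assume "reach (T0 - {g}) V a \<inter> reach (T0 - {g}) V b \<noteq> {}"
        then obtain z where "(a,z) \<in> (adj_in (T0 - {g}) V)\<^sup>*" "(b,z) \<in> (adj_in (T0 - {g}) V)\<^sup>*"
          by (auto simp: reach_def)
        then have "(a,b) \<in> (adj_in (T0 - {g}) V)\<^sup>*" by (meson rt_sym rtrancl_trans)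
        then show False using bZa by (simp add: reach_def)
      qed
      have cases: "(u \<in> reach (T0 - {g}) V a \<and> x \<in> reach (T0 - {g}) V b) \<or>
                   (x \<in> reach (T0 - {g}) V a \<and> u \<in> reach (T0 - {g}) V b)"
        using k1 k2 cd(1) cd'(1) disj by (auto simp: doubleton_eq_iff)
      have sub0: "adj_in (T0 - {g}) V \<subseteq> adj_in T0 V" by (rule adj_mono) auto
      have abE1: "(a,b) \<in> adj_in T0 V" using gT0 abV by (simp add: adj_in_def g_def)
      have abE: "(a,b) \<in> adj_in T0 V" "(b,a) \<in> adj_in T0 V" using abE1 adj_sym by auto
      from cases have "(u,x) \<in> (adj_in T0 V)\<^sup>*"
      proof
        assume h: "u \<in> reach (T0 - {g}) V a \<and> x \<in> reach (T0 - {g}) V b"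
        then have h1: "(a,u) \<in> (adj_in T0 V)\<^sup>*" and h2: "(b,x) \<in> (adj_in T0 V)\<^sup>*"
          using rt_mono_sub[OF sub0] by (auto simp: reach_def)
        have "(u,b) \<in> (adj_in T0 V)\<^sup>*" using rt_sym[OF h1] abE(1) by (rule rtrancl_into_rtrancl)
        then show ?thesis using h2 by (rule rtrancl_trans)
      next
        assume h: "x \<in> reach (T0 - {g}) V a \<and> u \<in> reach (T0 - {g}) V b"
        then have h1: "(a,x) \<in> (adj_in T0 V)\<^sup>*" and h2: "(b,u) \<in> (adj_in T0 V)\<^sup>*"
          using rt_mono_sub[OF sub0] by (auto simp: reach_def)
        have "(u,a) \<in> (adj_in T0 V)\<^sup>*" using rt_sym[OF h2] abE(2) by (rule rtrancl_into_rtrancl)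
        then show ?thesis using h1 by (rule rtrancl_trans)
      qed
      then show False using xA by (simp add: reach_def)
    qed
  qed
  show ?thesis unfolding tree_on_def T'_def[symmetric] T0_def[symmetric]
    using fin edges connT' bridges by blast
qed

end


lemma host_NH: assumes "host_tree V E T'" shows "host_tree V (NH V E) T'"
proof -
  have "induces_connected T' (\<Union>{e\<in>E. w \<in> e})" for w
  proof (unfold induces_connected_def, intro ballI)
    fix a b assume a: "a \<in> \<Union>{e\<in>E. w \<in> e}" and b: "b \<in> \<Union>{e\<in>E. w \<in> e}"
    then obtain e1 e2 where e: "e1 \<in> E" "w \<in> e1" "a \<in> e1" "e2 \<in> E" "w \<in> e2" "b \<in> e2" by blast
    have c1: "induces_connected T' e1" "induces_connected T' e2" using assms e by (auto simp: host_tree_def)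
    have "(a,w) \<in> (adj_in T' e1)\<^sup>*" using c1(1) e unfolding induces_connected_def by blast
    then have 1: "(a,w) \<in> (adj_in T' (\<Union>{e\<in>E. w \<in> e}))\<^sup>*" by (rule rt_mono[rotated 2]) (use e in auto)
    have "(w,b) \<in> (adj_in T' e2)\<^sup>*" using c1(2) e unfolding induces_connected_def by blast
    then have 2: "(w,b) \<in> (adj_in T' (\<Union>{e\<in>E. w \<in> e}))\<^sup>*" by (rule rt_mono[rotated 2]) (use e in auto)
    show "(a,b) \<in> (adj_in T' (\<Union>{e\<in>E. w \<in> e}))\<^sup>*" using 1 2 by (rule rtrancl_trans)
  qed
  then show ?thesis using assms by (auto simp: host_tree_def NH_def)
qed

lemma union_conn: assumes cf: "connected_family F" and c: "\<forall>A\<in>F. induces_connected T A"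
  shows "induces_connected T (\<Union>F)"
proof (unfold induces_connected_def, intro ballI)
  fix a b assume "a \<in> \<Union>F" "b \<in> \<Union>F"
  then obtain A1 A2 where A: "A1 \<in> F" "a \<in> A1" "A2 \<in> F" "b \<in> A2" by blast
  let ?R = "{(X, Y). X \<in> F \<and> Y \<in> F \<and> X \<inter> Y \<noteq> {}}"
  have "(A1,A2) \<in> ?R\<^sup>*" using cf A unfolding connected_family_def by blast
  then have "\<forall>b\<in>A2. (a,b) \<in> (adj_in T (\<Union>F))\<^sup>*"
  proof (induction rule: rtrancl_induct)
    case base
    show ?case
    proof
      fix b assume "b \<in> A1"
      then have "(a,b) \<in> (adj_in T A1)\<^sup>*" using c A unfolding induces_connected_def by blast
      then show "(a,b) \<in> (adj_in T (\<Union>F))\<^sup>*" by (rule rt_mono[rotated 2]) (use A in auto)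
    qed
  next
    case (step Y X)
    then obtain c0 where c0: "c0 \<in> Y" "c0 \<in> X" "X \<in> F" by blast
    show ?case
    proof
      fix b assume "b \<in> X"
      then have "(c0,b) \<in> (adj_in T X)\<^sup>*" using c c0 unfolding induces_connected_def by blast
      then have "(c0,b) \<in> (adj_in T (\<Union>F))\<^sup>*" by (rule rt_mono[rotated 2]) (use c0 in auto)
      moreover have "(a,c0) \<in> (adj_in T (\<Union>F))\<^sup>*" using step.IH c0 by blast
      ultimately show "(a,b) \<in> (adj_in T (\<Union>F))\<^sup>*" using rtrancl_trans by metis
    qed
  qed
  then show "(a,b) \<in> (adj_in T (\<Union>F))\<^sup>*" using A by blast
qed

lemma inter_fam: "finite G \<Longrightarrow> G \<noteq> {} \<Longrightarrow> G \<subseteq> comp_gen E \<Longrightarrow> \<Inter>G \<noteq> {} \<Longrightarrow> \<Inter>G \<in> comp_gen E"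
proof (induction G rule: finite_ne_induct)
  case (singleton x) then show ?case by simp
next
  case (insert x F)
  have "\<Inter>F \<noteq> {}" using insert.prems by auto
  then have "\<Inter>F \<in> comp_gen E" using insert by auto
  moreover have "x \<in> comp_gen E" using insert.prems by auto
  ultimately show ?case using comp_gen.inter[of x E "\<Inter>F"] insert.prems by auto
qed

context fixes V T assumes tr: "tree_on V T" begin

lemma inter_conn: assumes "A \<subseteq> V" "B \<subseteq> V" "induces_connected T A" "induces_connected T B"
  shows "induces_connected T (A \<inter> B)"
proof (unfold induces_connected_def, intro ballI)
  fix a b assume ab: "a \<in> A \<inter> B" "b \<in> A \<inter> B"
  then have "(a,b) \<in> (adj_in T A)\<^sup>*" using assms(3) unfolding induces_connected_def by blast
  then show "(a,b) \<in> (adj_in T (A \<inter> B))\<^sup>*" using L_int[OF tr assms(1,2,4)] ab by blast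
qed

lemma SF: assumes uv: "{u,v} \<in> T" and cf: "connected_family F"
  and FA: "\<forall>A\<in>F. A \<subseteq> V \<and> induces_connected T A" and u: "u \<in> \<Union>F" and v: "v \<in> \<Union>F"
  shows "\<exists>A\<in>F. u \<in> A \<and> v \<in> A"
proof (rule ccontr)
  assume neg: "\<not> (\<exists>A\<in>F. u \<in> A \<and> v \<in> A)"
  define sA where "sA = reach (T - {{u,v}}) V u"
  define sB where "sB = reach (T - {{u,v}}) V v"
  have disj: "sA \<inter> sB = {}" using sides_disj[OF tr uv] unfolding sA_def sB_def .
  have uA: "u \<in> sA" and vB: "v \<in> sB" using in_sides[OF tr uv] unfolding sA_def sB_def by auto
  have one: "A \<subseteq> sA \<or> A \<subseteq> sB" if "A \<in> F" for A
  proof (rule ccontr)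
    assume "\<not> (A \<subseteq> sA \<or> A \<subseteq> sB)"
    then obtain a b where ab: "a \<in> A" "a \<notin> sA" "b \<in> A" "b \<notin> sB" by blast
    have "A \<subseteq> sA \<union> sB" using cover[OF tr uv] FA that unfolding sA_def sB_def by blast
    then have "a \<in> sB" "b \<in> sA" using ab by auto
    then have "u \<in> A \<and> v \<in> A" using side_lemma[OF tr uv _ ab(3) ab(1)] FA that
      unfolding sA_def sB_def by blast
    then show False using neg that by blast
  qed
  obtain A1 A2 where A: "A1 \<in> F" "u \<in> A1" "A2 \<in> F" "v \<in> A2" using u v by blast
  have A1s: "A1 \<subseteq> sA" using one[OF A(1)] A(2) uA disj by blast
  let ?R = "{(X, Y). X \<in> F \<and> Y \<in> F \<and> X \<inter> Y \<noteq> {}}"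
  have "(A1,A2) \<in> ?R\<^sup>*" using cf A unfolding connected_family_def by blast
  then have "A2 \<subseteq> sA"
  proof (induction rule: rtrancl_induct)
    case base then show ?case using A1s .
  next
    case (step Y X)
    then have "X \<in> F" "Y \<inter> X \<noteq> {}" by auto
    then show ?case using one[of X] step.IH disj by blast
  qed
  then show False using A(4) vB disj by blast
qed

end

context fixes V E T assumes hg: "hypergraph V E" and ht: "host_tree V E T" begin

lemma tr: "tree_on V T" using ht by (simp add: host_tree_def)

lemma edge_conn: "e \<in> E \<Longrightarrow> induces_connected T e" using ht by (simp add: host_tree_def)
lemma edge_sub: "e \<in> E \<Longrightarrow> e \<subseteq> V \<and> e \<noteq> {}" using hg by (simp add: hypergraph_def)

lemma LW: assumes uv: "{u,v} \<in> T" and e: "e1 \<in> E" "e2 \<in> E" "w \<in> e1" "w \<in> e2" "u \<in> e1" "v \<in> e2"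
  shows "\<exists>e\<in>E. u \<in> e \<and> v \<in> e \<and> w \<in> e"
proof -
  have wV: "w \<in> V" using edge_sub e by blast
  have "w \<in> reach (T - {{u,v}}) V u \<union> reach (T - {{u,v}}) V v" using cover[OF tr uv wV] .
  then show ?thesis
  proof
    assume "w \<in> reach (T - {{u,v}}) V u"
    then have "u \<in> e2 \<and> v \<in> e2" using side_lemma[OF tr uv edge_conn[OF e(2)] e(4) e(6)] in_sides[OF tr uv] by blast
    then show ?thesis using e by blast
  next
    assume "w \<in> reach (T - {{u,v}}) V v"
    then have "u \<in> e1 \<and> v \<in> e1" using side_lemma[OF tr uv edge_conn[OF e(1)] e(5) e(3)] in_sides[OF tr uv] by blast
    then show ?thesis using e by blast
  qed
qed

lemma comp_props: "A \<in> comp_gen E \<Longrightarrow> A \<noteq> {} \<and> A \<subseteq> V \<and> induces_connected T A"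
proof (induction rule: comp_gen.induct)
  case (edge e) then show ?case using edge_sub edge_conn by blast
next
  case (inter A B) then show ?case using inter_conn[OF tr] by blast
next
  case (union F)
  have h1: "\<forall>A\<in>F. A \<noteq> {} \<and> A \<subseteq> V \<and> induces_connected T A" using union by blast
  have h2: "connected_family F" using union by blast
  have "F \<noteq> {}" using h2 by (simp add: connected_family_def)
  then have "\<Union>F \<noteq> {}" using h1 by blast
  moreover have "\<Union>F \<subseteq> V" using h1 by blast
  moreover have "induces_connected T (\<Union>F)" using union_conn[OF h2] h1 by blast
  ultimately show ?case by blast
qed

end


context fixes V E T assumes hg: "hypergraph V E" and ht: "host_tree V E T" begin

lemma IH_mem: "u \<in> V \<Longrightarrow> v \<in> V \<Longrightarrow> u \<in> IH V E {u,v} \<and> v \<in> IH V E {u,v}"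
  by (auto simp: IH_def)

lemma IH_sub_e: "e \<in> E \<Longrightarrow> u \<in> e \<Longrightarrow> v \<in> e \<Longrightarrow> IH V E {u,v} \<subseteq> e"
  by (auto simp: IH_def)

lemma IH_subV: "IH V E {u,v} \<subseteq> V"
  using hg by (auto simp: IH_def hypergraph_def)

lemma IH_Comp: assumes "u \<in> V" "v \<in> V" shows "IH V E {u,v} \<in> Comp V E"
proof (cases "\<exists>e\<in>E. {u,v} \<subseteq> e")
  case True
  define G where "G = {e\<in>E. {u,v} \<subseteq> e}"
  have IHG: "IH V E {u,v} = \<Inter>G" using True by (simp add: IH_def G_def)
  have "finite G" using hg by (simp add: hypergraph_def G_def)
  moreover have "G \<noteq> {}" using True by (auto simp: G_def)
  moreover have "G \<subseteq> comp_gen E" by (auto simp: G_def intro: comp_gen.edge)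
  moreover have "\<Inter>G \<noteq> {}" by (auto simp: G_def)
  ultimately have "\<Inter>G \<in> comp_gen E" by (rule inter_fam)
  moreover have "\<Inter>G \<subseteq> V" using IHG IH_subV[of u v] by simp
  ultimately show ?thesis unfolding IHG Comp_def by blast
next
  case False
  then have "IH V E {u,v} = V" unfolding IH_def by auto
  then show ?thesis by (simp add: Comp_def)
qed

lemma Comp_props: "A \<in> Comp V E \<Longrightarrow> A \<noteq> {} \<and> A \<subseteq> V \<and> induces_connected T A"
proof -
  assume "A \<in> Comp V E"
  then consider "A = V" | w where "A = {w}" "w \<in> V" | "A \<in> comp_gen E" by (auto simp: Comp_def)
  then show ?thesis
  proof cases
    case 1
    have "V \<noteq> {}" using tr[OF hg ht] by (simp add: tree_on_def)
    moreover have "induces_connected T V" using tr[OF hg ht] by (simp add: tree_on_def)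
    ultimately show ?thesis using 1 by simp
  next
    case 2 then show ?thesis using conn_single by simp
  next
    case 3 then show ?thesis using comp_props[OF hg ht] by blast
  qed
qed

lemma Comp_int: assumes "A \<in> Comp V E" "B \<in> Comp V E" "A \<inter> B \<noteq> {}" shows "A \<inter> B \<in> Comp V E"
proof -
  have AV: "A \<subseteq> V" and BV: "B \<subseteq> V" using Comp_props assms by auto
  consider "A = V" | w where "A = {w}" "w \<in> V" | "A \<in> comp_gen E" "A \<subset> V"
    using assms(1) by (auto simp: Comp_def)
  then show ?thesis
  proof cases
    case 1 then show ?thesis using BV assms(2) by (simp add: Int_absorb1)
  next
    case 2 then have "A \<inter> B = {w}" using assms(3) by auto
    then show ?thesis using 2 by (auto simp: Comp_def)
  next
    case 3
    consider "B = V" | w where "B = {w}" "w \<in> V" | "B \<in> comp_gen E" "B \<subset> V"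
      using assms(2) by (auto simp: Comp_def)
    then show ?thesis
    proof cases
      case 1 then show ?thesis using AV assms(1) by (simp add: Int_absorb2)
    next
      case 2 then have "A \<inter> B = {w}" using assms(3) by auto
      then show ?thesis using 2 by (auto simp: Comp_def)
    next
      case 4: 3
      have "A \<inter> B \<in> comp_gen E" using comp_gen.inter[OF 3(1) 4(1) assms(3)] .
      moreover have "A \<inter> B \<subset> V" using 3(2) by blast
      ultimately show ?thesis by (simp add: Comp_def)
    qed
  qed
qed

lemma K: assumes uv: "{u,v} \<in> T" shows "A \<in> comp_gen E \<Longrightarrow> u \<in> A \<longrightarrow> v \<in> A \<longrightarrow> IH V E {u,v} \<subseteq> A"
proof (induction rule: comp_gen.induct)
  case (edge e) then show ?case using IH_sub_e by blast
next
  case (inter A B) then show ?case by blast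
next
  case (union F)
  have h1: "\<forall>A\<in>F. A \<noteq> {} \<and> A \<subseteq> V \<and> induces_connected T A" using union comp_props[OF hg ht] by blast
  have h2: "connected_family F" using union by blast
  show ?case
  proof (intro impI)
    assume "u \<in> \<Union>F" "v \<in> \<Union>F"
    then obtain A where "A \<in> F" "u \<in> A" "v \<in> A" using SF[OF tr[OF hg ht] uv h2] h1 by blast
    then show "IH V E {u,v} \<subseteq> \<Union>F" using union by blast
  qed
qed

end


definition C1 :: "'a set \<Rightarrow> 'a set set \<Rightarrow> 'a set set \<Rightarrow> bool" where
  "C1 V E T \<longleftrightarrow> (\<forall>u v. {u, v} \<in> T \<longrightarrow>
               (\<forall>x\<in>V. x \<notin> IH V E {u, v} \<longrightarrow>
                  (\<exists>y\<in>V. (\<exists>e\<in>E. {u, v, y} \<subseteq> e) \<and> \<not> (\<exists>e\<in>E. {x, y} \<subseteq> e))))"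

lemma C1D: assumes "C1 V E T" "{u,v} \<in> T" "x \<in> V" "x \<notin> IH V E {u,v}"
  shows "\<exists>y\<in>V. (\<exists>e\<in>E. {u, v, y} \<subseteq> e) \<and> \<not> (\<exists>e\<in>E. {x, y} \<subseteq> e)"
proof -
  have "\<forall>x\<in>V. x \<notin> IH V E {u, v} \<longrightarrow>
                  (\<exists>y\<in>V. (\<exists>e\<in>E. {u, v, y} \<subseteq> e) \<and> \<not> (\<exists>e\<in>E. {x, y} \<subseteq> e))"
    using assms(1) unfolding C1_def using assms(2) by (elim allE[of _ u] allE[of _ v]) (erule mp)
  from mp[OF bspec[OF this assms(3)] assms(4)] show ?thesis .
qed
lemma L_int_fam: assumes tr: "tree_on V T" shows "finite G \<Longrightarrow> \<forall>S'\<in>G. S' \<subseteq> V \<and> induces_connected T S' \<and> p \<in> S' \<and> q \<in> S'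
  \<Longrightarrow> S \<subseteq> V \<Longrightarrow> (p,q) \<in> (adj_in T S)\<^sup>* \<Longrightarrow> (p,q) \<in> (adj_in T (S \<inter> \<Inter>G))\<^sup>*"
proof (induction G rule: finite_induct)
  case empty then show ?case by simp
next
  case (insert A G)
  have G': "\<forall>S'\<in>G. S' \<subseteq> V \<and> induces_connected T S' \<and> p \<in> S' \<and> q \<in> S'" using insert.prems(1) by blast
  have 1: "(p,q) \<in> (adj_in T (S \<inter> \<Inter>G))\<^sup>*" using insert.IH[OF G' insert.prems(2,3)] .
  have A: "A \<subseteq> V" "induces_connected T A" "p \<in> A" "q \<in> A" using insert.prems(1) by auto
  have SV: "S \<inter> \<Inter>G \<subseteq> V" using insert.prems(2) by blast
  have "(p,q) \<in> (adj_in T ((S \<inter> \<Inter>G) \<inter> A))\<^sup>*"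
    using L_int[OF tr SV A(1) A(2) A(3) A(4) 1] .
  moreover have "(S \<inter> \<Inter>G) \<inter> A = S \<inter> \<Inter>(insert A G)" by blast
  ultimately show ?case by simp
qed

context fixes V E T assumes hg: "hypergraph V E" and ht: "host_tree V E T" begin

lemma C1_equiv: assumes c1: "C1 V E T" shows "equivalent V E (NH V E)"
  unfolding equivalent_def
proof (intro allI iffI)
  fix T' assume "host_tree V E T'" then show "host_tree V (NH V E) T'" by (rule host_NH)
next
  fix T' assume h: "host_tree V (NH V E) T'"
  have tr': "tree_on V T'" using h by (simp add: host_tree_def)
  have Nc: "induces_connected T' (\<Union>{e\<in>E. y \<in> e})" if "y \<in> V" for y
    using h that by (auto simp: host_tree_def NH_def)
  have NV: "\<Union>{e\<in>E. y \<in> e} \<subseteq> V" for y using hg by (auto simp: hypergraph_def)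
  have estep: "(w,z) \<in> (adj_in T' e)\<^sup>*" if e: "e \<in> E" and wz: "{w,z} \<in> T" "w \<in> e" "z \<in> e" for e w z
  proof -
    define G where "G = (\<lambda>y. \<Union>{e\<in>E. y \<in> e}) ` {y\<in>V. \<exists>e'\<in>E. {w,z,y} \<subseteq> e'}"
    have finG: "finite G" using hg by (simp add: G_def hypergraph_def)
    have GP: "\<forall>S'\<in>G. S' \<subseteq> V \<and> induces_connected T' S' \<and> w \<in> S' \<and> z \<in> S'"
      unfolding G_def using Nc NV by blast
    have wzV: "w \<in> V" "z \<in> V" using edgeV[OF tr[OF hg ht] wz(1)] by auto
    have "(w,z) \<in> (adj_in T' V)\<^sup>*" using connV[OF tr' wzV] .
    then have 1: "(w,z) \<in> (adj_in T' (V \<inter> \<Inter>G))\<^sup>*" using L_int_fam[OF tr' finG GP] by blast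
    have "V \<inter> \<Inter>G \<subseteq> IH V E {w,z}"
    proof
      fix x assume x: "x \<in> V \<inter> \<Inter>G"
      show "x \<in> IH V E {w,z}"
      proof (rule ccontr)
        assume "x \<notin> IH V E {w,z}"
        then obtain y where y: "y \<in> V" "\<exists>e\<in>E. {w,z,y} \<subseteq> e" "\<not> (\<exists>e\<in>E. {x,y} \<subseteq> e)"
          using C1D[OF c1 wz(1), of x] x by blast
        have "\<Union>{e\<in>E. y \<in> e} \<in> G" using y unfolding G_def by blast
        then have "x \<in> \<Union>{e\<in>E. y \<in> e}" using x by blast
        then show False using y(3) by blast
      qed
    qed
    also have "\<dots> \<subseteq> e" using IH_sub_e[OF hg ht e wz(2,3)] .
    finally have sub: "V \<inter> \<Inter>G \<subseteq> e" .
    show ?thesis using rt_mono[OF order_refl sub 1] .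
  qed
  have "induces_connected T' e" if e: "e \<in> E" for e
  proof (unfold induces_connected_def, intro ballI)
    fix a b assume "a \<in> e" "b \<in> e"
    then have "(a,b) \<in> (adj_in T e)\<^sup>*" using edge_conn[OF hg ht e] unfolding induces_connected_def by blast
    then show "(a,b) \<in> (adj_in T' e)\<^sup>*"
    proof (induction rule: rtrancl_induct)
      case base then show ?case by simp
    next
      case (step y z)
      then have "{y,z} \<in> T" "y \<in> e" "z \<in> e" by (auto simp: adj_in_def)
      then have "(y,z) \<in> (adj_in T' e)\<^sup>*" using estep[OF e] by blast
      then show ?case using step.IH by (rule rtrancl_trans[rotated])
    qed
  qed
  then show "host_tree V E T'" using tr' by (simp add: host_tree_def)
qed

lemma noC1: assumes uv: "{u,v} \<in> T" and xB: "x \<in> reach (T - {{u,v}}) V v"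
  and xI: "x \<notin> IH V E {u,v}"
  and noy: "\<forall>y\<in>V. (\<exists>e\<in>E. {u,v,y} \<subseteq> e) \<longrightarrow> (\<exists>e\<in>E. {x,y} \<subseteq> e)"
  shows "\<not> equivalent V E (NH V E)"
proof -
  have trT: "tree_on V T" using tr[OF hg ht] .
  define T' where "T' = insert {u,x} (T - {{u,v}})"
  define sA where "sA = reach (T - {{u,v}}) V u"
  define sB where "sB = reach (T - {{u,v}}) V v"
  have disj: "sA \<inter> sB = {}" using sides_disj[OF trT uv] unfolding sA_def sB_def .
  have uA: "u \<in> sA" and vB: "v \<in> sB" using in_sides[OF trT uv] unfolding sA_def sB_def by auto
  have uV: "u \<in> V" and vV: "v \<in> V" using edgeV[OF trT uv] by auto
  have xV: "x \<in> V" using reach_sub[OF xB] vV by auto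
  have trT': "tree_on V T'" unfolding T'_def using exch[OF trT uv xB] .
  have sub0: "adj_in (T - {{u,v}}) S \<subseteq> adj_in T' S" for S unfolding T'_def by (rule adj_mono) auto
  obtain e0 where e0: "e0 \<in> E" "u \<in> e0" "v \<in> e0" "x \<notin> e0"
  proof (cases "\<exists>e\<in>E. {u,v} \<subseteq> e")
    case True
    then have "IH V E {u,v} = \<Inter>{e\<in>E. {u,v} \<subseteq> e}" by (simp add: IH_def)
    then show ?thesis using xI that by auto
  next
    case False
    then have "IH V E {u,v} = V" unfolding IH_def by auto
    then show ?thesis using xI xV by simp
  qed
  have notE: "\<not> host_tree V E T'"
  proof
    assume "host_tree V E T'"
    then have "induces_connected T' e0" using e0 by (simp add: host_tree_def)
    then have P: "(u,v) \<in> (adj_in T' e0)\<^sup>*" using e0 unfolding induces_connected_def by blast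
    have "v \<notin> sA" using vB disj by blast
    then obtain c d where cd: "c \<in> sA" "d \<notin> sA" "(c,d) \<in> adj_in T' e0"
      using leave[OF P uA] by blast
    then have cdT: "{c,d} \<in> T'" "c \<in> e0" "d \<in> e0" by (auto simp: adj_in_def)
    show False
    proof (cases "{c,d} = {u,x}")
      case True then show False using cdT e0(4) by (auto simp: doubleton_eq_iff)
    next
      case False
      then have "{c,d} \<in> T" "{c,d} \<noteq> {u,v}" using cdT(1) unfolding T'_def by auto
      then show False using closure[OF trT uv _ _ cd(1)[unfolded sA_def]] cd(2) unfolding sA_def by blast
    qed
  qed
  have NHT: "host_tree V (NH V E) T" using host_NH[OF ht] .
  have isNH: "host_tree V (NH V E) T'"
  proof -
    have "induces_connected T' (\<Union>{e\<in>E. w \<in> e})" if wV: "w \<in> V" for w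
    proof -
      define N where "N = \<Union>{e\<in>E. w \<in> e}"
      have NV: "N \<subseteq> V" using hg by (auto simp: hypergraph_def N_def)
      have Nc: "induces_connected T N" using NHT wV by (auto simp: host_tree_def NH_def N_def)
      show ?thesis
      proof (cases "u \<in> N \<and> v \<in> N")
        case True
        then obtain e1 e2 where "e1 \<in> E" "w \<in> e1" "u \<in> e1" "e2 \<in> E" "w \<in> e2" "v \<in> e2"
          unfolding N_def by blast
        then obtain e where "e \<in> E" "u \<in> e" "v \<in> e" "w \<in> e" using LW[OF hg ht uv] by metis
        then obtain e' where "e' \<in> E" "{x,w} \<subseteq> e'" using noy wV by blast
        then have xN: "x \<in> N" unfolding N_def by blast
        have fromv: "(v,z) \<in> (adj_in T' N)\<^sup>*" if zN: "z \<in> N" for z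
        proof -
          have vz: "(v,z) \<in> (adj_in T N)\<^sup>*" using Nc True zN unfolding induces_connected_def by blast
          note LS = L_side[OF trT uv vz]
          have "z \<in> sA \<union> sB" using cover[OF trT uv] zN NV unfolding sA_def sB_def by blast
          then show ?thesis
          proof
            assume "z \<in> sB"
            then show ?thesis using LS rt_mono_sub[OF sub0] unfolding sB_def by blast
          next
            assume zA: "z \<in> sA"
            have vx: "(v,x) \<in> (adj_in T N)\<^sup>*" using Nc True xN unfolding induces_connected_def by blast
            have "(v,x) \<in> (adj_in (T - {{u,v}}) N)\<^sup>*" using L_side[OF trT uv vx] xB by blast
            then have 1: "(v,x) \<in> (adj_in T' N)\<^sup>*" using rt_mono_sub[OF sub0] by blast
            have "(u,x) \<in> adj_in T' N" using xN True by (simp add: adj_in_def T'_def)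
            then have 2: "(x,u) \<in> adj_in T' N" by (rule adj_sym)
            have "(u,z) \<in> (adj_in (T - {{u,v}}) N)\<^sup>*" using LS zA unfolding sA_def by blast
            then have 3: "(u,z) \<in> (adj_in T' N)\<^sup>*" using rt_mono_sub[OF sub0] by blast
            have "(v,u) \<in> (adj_in T' N)\<^sup>*" using 1 2 by (rule rtrancl_into_rtrancl)
            then show ?thesis using 3 by (rule rtrancl_trans)
          qed
        qed
        show ?thesis unfolding N_def[symmetric] using conn_from[of v N T'] fromv True by blast
      next
        case False
        have "adj_in T N \<subseteq> adj_in T' N"
        proof
          fix p assume "p \<in> adj_in T N"
          then obtain c d where p: "p = (c,d)" "{c,d} \<in> T" "c \<in> N" "d \<in> N" by (auto simp: adj_in_def)
          have "{c,d} \<noteq> {u,v}" using False p by (auto simp: doubleton_eq_iff)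
          then show "p \<in> adj_in T' N" using p by (auto simp: adj_in_def T'_def)
        qed
        then show ?thesis unfolding N_def[symmetric] using Nc rt_mono_sub[of T N T' N] unfolding induces_connected_def by blast
      qed
    qed
    then show ?thesis using trT' by (auto simp: host_tree_def NH_def)
  qed
  show ?thesis using notE isNH unfolding equivalent_def by blast
qed

end


definition C2 :: "'a set \<Rightarrow> 'a set set \<Rightarrow> bool" where
  "C2 V E \<longleftrightarrow> (\<forall>B. basic_set V E B \<longrightarrow>
               (\<forall>x\<in>V. x \<notin> B \<longrightarrow>
                  (\<exists>y\<in>V. (\<exists>e\<in>E. insert y B \<subseteq> e) \<and> \<not> (\<exists>e\<in>E. {x, y} \<subseteq> e))))"

lemma C2D: assumes "C2 V E" "basic_set V E B" "x \<in> V" "x \<notin> B"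
  shows "\<exists>y\<in>V. (\<exists>e\<in>E. insert y B \<subseteq> e) \<and> \<not> (\<exists>e\<in>E. {x, y} \<subseteq> e)"
proof -
  have "\<forall>x\<in>V. x \<notin> B \<longrightarrow> (\<exists>y\<in>V. (\<exists>e\<in>E. insert y B \<subseteq> e) \<and> \<not> (\<exists>e\<in>E. {x, y} \<subseteq> e))"
    using assms(1) unfolding C2_def using assms(2) by (elim allE[of _ B]) (erule mp)
  from mp[OF bspec[OF this assms(3)] assms(4)] show ?thesis .
qed

lemma sym_rt: assumes "\<forall>a b. (a,b) \<in> R \<longrightarrow> (b,a) \<in> R" shows "(x,y) \<in> R\<^sup>* \<Longrightarrow> (y,x) \<in> R\<^sup>*"
proof (induction rule: rtrancl_induct)
  case base then show ?case by simp
next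
  case (step y z)
  then have "(z,y) \<in> R" using assms by blast
  then show ?case using step.IH by (rule converse_rtrancl_into_rtrancl)
qed

context fixes V E T assumes hg: "hypergraph V E" and ht: "host_tree V E T" begin

lemma basic_C1: assumes eq: "equivalent V E (NH V E)" shows "C1 V E T"
  unfolding C1_def
proof (intro allI impI ballI)
  fix u v x assume uv: "{u,v} \<in> T" and xV: "x \<in> V" and xI: "x \<notin> IH V E {u,v}"
  have trT: "tree_on V T" using tr[OF hg ht] .
  show "\<exists>y\<in>V. (\<exists>e\<in>E. {u, v, y} \<subseteq> e) \<and> \<not> (\<exists>e\<in>E. {x, y} \<subseteq> e)"
  proof (rule ccontr)
    assume neg: "\<not> ?thesis"
    have noy: "\<forall>y\<in>V. (\<exists>e\<in>E. {u,v,y} \<subseteq> e) \<longrightarrow> (\<exists>e\<in>E. {x,y} \<subseteq> e)" using neg by blast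
    have "x \<in> reach (T - {{u,v}}) V u \<union> reach (T - {{u,v}}) V v" using cover[OF trT uv xV] .
    then show False
    proof
      assume "x \<in> reach (T - {{u,v}}) V v"
      then show False using noC1[OF hg ht uv _ xI noy] eq by blast
    next
      assume xA: "x \<in> reach (T - {{u,v}}) V u"
      have sw: "{v,u} = {u,v}" by blast
      have vu: "{v,u} \<in> T" using uv sw by simp
      have xA': "x \<in> reach (T - {{v,u}}) V u" using xA sw by simp
      have xI': "x \<notin> IH V E {v,u}" using xI sw by simp
      have sw3: "{v,u,y} = {u,v,y}" for y by blast
      have noy': "\<forall>y\<in>V. (\<exists>e\<in>E. {v,u,y} \<subseteq> e) \<longrightarrow> (\<exists>e\<in>E. {x,y} \<subseteq> e)" using noy sw3 by simp
      show False using noC1[OF hg ht vu xA' xI' noy'] eq by blast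
    qed
  qed
qed

lemma C2_C1: assumes c2: "C2 V E" shows "C1 V E T"
  unfolding C1_def
proof (intro allI impI ballI)
  fix u v x assume uv: "{u,v} \<in> T" and xV: "x \<in> V" and xI: "x \<notin> IH V E {u,v}"
  have trT: "tree_on V T" using tr[OF hg ht] .
  have uV: "u \<in> V" and vV: "v \<in> V" and uv': "u \<noteq> v" using edgeV[OF trT uv] by auto
  define M where "M = {A \<in> Comp V E. u \<in> A \<and> v \<in> A}"
  have IHM: "IH V E {u,v} \<in> M" using IH_Comp[OF hg ht uV vV] IH_mem[OF hg ht uV vV] by (simp add: M_def)
  obtain B where B: "B \<in> M" and Bmin: "\<And>A. A \<in> M \<Longrightarrow> card B \<le> card A"
    using ex_has_least_nat[of "\<lambda>A. A \<in> M" "IH V E {u,v}" card] IHM by blast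
  have BC: "B \<in> Comp V E" and uB: "u \<in> B" and vB: "v \<in> B" using B by (auto simp: M_def)
  have BV: "B \<subseteq> V" using Comp_props[OF hg ht BC] by blast
  have finB: "finite B" using BV finV[OF trT] finite_subset by blast
  have BI: "B \<subseteq> IH V E {u,v}"
  proof -
    have "B \<inter> IH V E {u,v} \<in> Comp V E"
      using Comp_int[OF hg ht BC IH_Comp[OF hg ht uV vV]] uB IH_mem[OF hg ht uV vV] by blast
    then have "B \<inter> IH V E {u,v} \<in> M" using uB vB IH_mem[OF hg ht uV vV] by (simp add: M_def)
    then have "card B \<le> card (B \<inter> IH V E {u,v})" by (rule Bmin)
    then have "B \<inter> IH V E {u,v} = B" using card_seteq[OF finB] by blast
    then show ?thesis by blast
  qed
  have bas: "basic_set V E B" unfolding basic_set_def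
  proof (intro conjI)
    show "B \<in> Comp V E" by (rule BC)
    have "card {u,v} \<le> card B" using card_mono[OF finB] uB vB by simp
    then show "card B > 1" using uv' by simp
    show "\<not> (\<exists>F\<subseteq>Comp V E. (\<forall>A\<in>F. A \<subset> B) \<and> connected_family F \<and> \<Union>F = B)"
    proof
      assume "\<exists>F\<subseteq>Comp V E. (\<forall>A\<in>F. A \<subset> B) \<and> connected_family F \<and> \<Union>F = B"
      then obtain F where F: "F \<subseteq> Comp V E" "\<forall>A\<in>F. A \<subset> B" "connected_family F" "\<Union>F = B" by blast
      have FA: "\<forall>A\<in>F. A \<subseteq> V \<and> induces_connected T A" using F(1) Comp_props[OF hg ht] by blast
      obtain A where A: "A \<in> F" "u \<in> A" "v \<in> A" using SF[OF trT uv F(3) FA] F(4) uB vB by blast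
      have "A \<in> M" using A F(1) by (auto simp: M_def)
      then have "card B \<le> card A" by (rule Bmin)
      moreover have "card A < card B" using psubset_card_mono[OF finB] F(2) A(1) by blast
      ultimately show False by simp
    qed
  qed
  have "x \<notin> B" using xI BI by blast
  then obtain y e where y: "y \<in> V" "e \<in> E" "insert y B \<subseteq> e" "\<not> (\<exists>e\<in>E. {x, y} \<subseteq> e)"
    using C2D[OF c2 bas xV] by blast
  show "\<exists>y\<in>V. (\<exists>e\<in>E. {u, v, y} \<subseteq> e) \<and> \<not> (\<exists>e\<in>E. {x, y} \<subseteq> e)"
    using y uB vB by blast
qed

lemma C1_C2: assumes c1: "C1 V E T" shows "C2 V E"
  unfolding C2_def
proof (intro allI impI ballI)
  fix B x assume bas: "basic_set V E B" and xV: "x \<in> V" and xB: "x \<notin> B"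
  have trT: "tree_on V T" using tr[OF hg ht] .
  have BC: "B \<in> Comp V E" and cB: "card B > 1"
    and nodec: "\<not> (\<exists>F. F \<subseteq> Comp V E \<and> (\<forall>A\<in>F. A \<subset> B) \<and> connected_family F \<and> \<Union>F = B)"
    using bas by (auto simp: basic_set_def)
  have BV: "B \<subseteq> V" and Bc: "induces_connected T B" using Comp_props[OF hg ht BC] by auto
  have BnV: "B \<noteq> V" using xV xB by blast
  have Bns: "B \<noteq> {w}" for w using cB by auto
  have Bcg: "B \<in> comp_gen E" using BC BnV Bns by (auto simp: Comp_def)
  have edge_at: "\<exists>c. {b,c} \<in> T \<and> c \<in> B" if bB: "b \<in> B" for b
  proof -
    have "\<not> B \<subseteq> {b}"
    proof
      assume "B \<subseteq> {b}"
      then have "card B \<le> card {b}" by (intro card_mono) auto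
      then show False using cB by simp
    qed
    then obtain b' where b': "b' \<in> B" "b' \<noteq> b" by blast
    have "(b,b') \<in> (adj_in T B)\<^sup>*" using Bc bB b' unfolding induces_connected_def by blast
    then obtain c where "(b,c) \<in> adj_in T B" using b'(2) by (metis converse_rtranclE)
    then show ?thesis by (auto simp: adj_in_def)
  qed
  have "\<exists>u v. {u,v} \<in> T \<and> u \<in> B \<and> v \<in> B \<and> B \<subseteq> IH V E {u,v}"
  proof (rule ccontr)
    assume neg: "\<not> ?thesis"
    define F where "F = {IH V E {u,v} \<inter> B | u v. {u,v} \<in> T \<and> u \<in> B \<and> v \<in> B}"
    have memF: "IH V E {u,v} \<inter> B \<in> F" if "{u,v} \<in> T" "u \<in> B" "v \<in> B" for u v
      using that unfolding F_def by blast
    have inIH: "u \<in> IH V E {u,v} \<inter> B \<and> v \<in> IH V E {u,v} \<inter> B" if "{u,v} \<in> T" "u \<in> B" "v \<in> B" for u v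
      using that IH_mem[OF hg ht, of u v] BV by blast
    have FC: "F \<subseteq> Comp V E"
    proof
      fix A assume "A \<in> F"
      then obtain u v where A: "A = IH V E {u,v} \<inter> B" "{u,v} \<in> T" "u \<in> B" "v \<in> B" unfolding F_def by blast
      have uvV: "u \<in> V" "v \<in> V" using A BV by auto
      show "A \<in> Comp V E" unfolding A(1)
        using Comp_int[OF hg ht IH_Comp[OF hg ht uvV] BC] inIH[OF A(2-4)] by blast
    qed
    have Fsub: "\<forall>A\<in>F. A \<subset> B"
    proof
      fix A assume "A \<in> F"
      then obtain u v where A: "A = IH V E {u,v} \<inter> B" "{u,v} \<in> T" "u \<in> B" "v \<in> B" unfolding F_def by blast
      have "\<not> B \<subseteq> IH V E {u,v}" using neg A by blast
      then show "A \<subset> B" using A(1) by blast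
    qed
    have UF: "\<Union>F = B"
    proof
      show "\<Union>F \<subseteq> B" unfolding F_def by blast
      show "B \<subseteq> \<Union>F"
      proof
        fix b assume bB: "b \<in> B"
        then obtain c where c: "{b,c} \<in> T" "c \<in> B" using edge_at by blast
        then show "b \<in> \<Union>F" using memF[OF c(1) bB c(2)] inIH[OF c(1) bB c(2)] by blast
      qed
    qed
    have cf: "connected_family F" unfolding connected_family_def
    proof (intro conjI)
      have "B \<noteq> {}" using cB by auto
      then obtain b0 where b0: "b0 \<in> B" by blast
      then obtain c0 where c0: "{b0,c0} \<in> T" "c0 \<in> B" using edge_at by blast
      define F0 where "F0 = IH V E {b0,c0} \<inter> B"
      have F0F: "F0 \<in> F" using memF[OF c0(1) b0 c0(2)] F0_def by simp
      have b0F0: "b0 \<in> F0" using inIH[OF c0(1) b0 c0(2)] F0_def by simp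
      show "F \<noteq> {}" using F0F by blast
      have "F \<subseteq> Pow V" using FC Comp_props[OF hg ht] by blast
      then show "finite F" using finV[OF trT] finite_subset by (metis finite_Pow_iff)
      let ?R = "{(X, Y). X \<in> F \<and> Y \<in> F \<and> X \<inter> Y \<noteq> {}}"
      have P: "\<forall>M\<in>F. z \<in> M \<longrightarrow> (F0,M) \<in> ?R\<^sup>*" if "(b0,z) \<in> (adj_in T B)\<^sup>*" for z
        using that
      proof (induction rule: rtrancl_induct)
        case base
        show ?case
        proof (intro ballI impI)
          fix M assume "M \<in> F" "b0 \<in> M"
          then have "(F0,M) \<in> ?R" using F0F b0F0 by blast
          then show "(F0,M) \<in> ?R\<^sup>*" by blast
        qed
      next
        case (step w z)
        then have wz: "{w,z} \<in> T" "w \<in> B" "z \<in> B" by (auto simp: adj_in_def)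
        define Mwz where "Mwz = IH V E {w,z} \<inter> B"
        have MF: "Mwz \<in> F" using memF[OF wz] Mwz_def by simp
        have wzM: "w \<in> Mwz" "z \<in> Mwz" using inIH[OF wz] Mwz_def by auto
        have 1: "(F0,Mwz) \<in> ?R\<^sup>*" using step.IH MF wzM by blast
        show ?case
        proof (intro ballI impI)
          fix M assume "M \<in> F" "z \<in> M"
          then have "(Mwz,M) \<in> ?R" using MF wzM by blast
          then show "(F0,M) \<in> ?R\<^sup>*" using 1 by (rule rtrancl_into_rtrancl[rotated])
        qed
      qed
      have allF: "(F0,X) \<in> ?R\<^sup>*" if XF: "X \<in> F" for X
      proof -
        obtain u v where X: "X = IH V E {u,v} \<inter> B" "{u,v} \<in> T" "u \<in> B" "v \<in> B"
          using XF unfolding F_def by blast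
        have "(b0,u) \<in> (adj_in T B)\<^sup>*" using Bc b0 X(3) unfolding induces_connected_def by blast
        then show ?thesis using P XF inIH[OF X(2-4)] X(1) by blast
      qed
      have symR: "\<forall>a b. (a,b) \<in> ?R \<longrightarrow> (b,a) \<in> ?R" by blast
      show "\<forall>A\<in>F. \<forall>B\<in>F. (A, B) \<in> ?R\<^sup>*"
      proof (intro ballI)
        fix X Y assume "X \<in> F" "Y \<in> F"
        then have "(X,F0) \<in> ?R\<^sup>*" "(F0,Y) \<in> ?R\<^sup>*" using allF sym_rt[OF symR] by blast+
        then show "(X,Y) \<in> ?R\<^sup>*" by (rule rtrancl_trans)
      qed
    qed
    show False using nodec FC Fsub cf UF by blast
  qed
  then obtain u v where uv: "{u,v} \<in> T" "u \<in> B" "v \<in> B" "B \<subseteq> IH V E {u,v}" by blast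
  have "IH V E {u,v} \<subseteq> B" using K[OF hg ht uv(1) Bcg] uv(2,3) by blast
  then have xI: "x \<notin> IH V E {u,v}" using xB by blast
  obtain y e where y: "y \<in> V" "e \<in> E" "{u,v,y} \<subseteq> e" "\<not> (\<exists>e\<in>E. {x, y} \<subseteq> e)"
    using C1D[OF c1 uv(1) xV xI] by blast
  have "IH V E {u,v} \<subseteq> e" using IH_sub_e[OF hg ht y(2)] y(3) by blast
  then have "insert y B \<subseteq> e" using uv(4) y(3) by blast
  then show "\<exists>y\<in>V. (\<exists>e\<in>E. insert y B \<subseteq> e) \<and> \<not> (\<exists>e\<in>E. {x, y} \<subseteq> e)" using y by blast
qed

end

theorem mainTheorem8:
  assumes "hypertree V E"
    and "host_tree V E T"
  shows "(basic_hypertree V E \<longleftrightarrow>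
            (\<forall>u v. {u, v} \<in> T \<longrightarrow>
               (\<forall>x\<in>V. x \<notin> IH V E {u, v} \<longrightarrow>
                  (\<exists>y\<in>V. (\<exists>e\<in>E. {u, v, y} \<subseteq> e) \<and> \<not> (\<exists>e\<in>E. {x, y} \<subseteq> e)))))
       \<and> (basic_hypertree V E \<longleftrightarrow>
            (\<forall>B. basic_set V E B \<longrightarrow>
               (\<forall>x\<in>V. x \<notin> B \<longrightarrow>
                  (\<exists>y\<in>V. (\<exists>e\<in>E. insert y B \<subseteq> e) \<and> \<not> (\<exists>e\<in>E. {x, y} \<subseteq> e)))))"
proof -
  have hg: "hypergraph V E" using assms(1) by (simp add: hypertree_def)
  note ht = assms(2)
  have p1: "basic_hypertree V E \<longleftrightarrow> C1 V E T"
    using basic_C1[OF hg ht] C1_equiv[OF hg ht] assms(1) by (auto simp: basic_hypertree_def)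
  have p2: "C1 V E T \<longleftrightarrow> C2 V E" using C1_C2[OF hg ht] C2_C1[OF hg ht] by blast
  have p3: "basic_hypertree V E \<longleftrightarrow> C2 V E" using p1 p2 by simp
  show ?thesis using p1 p3 unfolding C1_def C2_def by blast
qed


end
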